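(* Fix $c\in(0,1/2)$, a set $S\subseteq\mathbb R^d$, and a concept class $\mathbb D$ of covariate-outcome distributions satisfying Condition 3 with constant $c$, such that every $\mathcal P\in\mathbb D$ has $\mathrm{supp}(\mathcal P_X)=\mathbb R^d$. Then there exists a map $f$ from distributions on $\mathbb R^d\times\{0,1\}\times\mathbb R$ to $\mathbb R$ such that $f(\mathcal C_{\mathcal D})=\tau_{\mathcal D}$ for every observational study $\mathcal D$ that is a $c$-RD-design (with this set $S$) and is realizable with respect to $\mathbb D$ (i.e. $\mathcal D_{X,Y(0)},\mathcal D_{X,Y(1)}\in\mathbb D$).
   Context: An observational study is a probability distribution $\mathcal D$ of a random tuple $(X,T,Y(0),Y(1))$ with $X\in\mathbb R^d$, $T\in\{0,1\}$, $Y(0),Y(1)\in\mathbb R$; the laws $\mathcal D_{X,Y(t)}$ of $(X,Y(t))$ have densities. The censored distribution $\mathcal C_{\mathcal D}$ is the law of $(X,T,Y(T))$; $\tau_{\mathcal D}=\mathbb E_{\mathcal D}[Y(1)-Y(0)]$. Generalized propensity scores: $p_t(x,y)=\Pr_{\mathcal D}[T=t\mid X=x,Y(t)=y]$. For a distribution $\mathcal P$ with density on $\mathbb R^d\times\mathbb R$, $\mathcal P(x,y)$ denotes its density and $\mathcal P_X$ its $x$-marginal. $\mathrm{vol}$ denotes Lebesgue measure. $c$-RD-design: $\mathcal D$ is a $c$-RD-design if there is $S\subseteq\mathbb R^d$ with $\mathrm{vol}(S)>c$, $\mathrm{vol}(\mathbb R^d\setminus S)>c$, and $p_0(x,y)=\mathbb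 1\{x\notin S\}$, $p_1(x,y)=\mathbb 1\{x\in S\}$ for all $x\in\mathbb R^d,y\in\mathbb R$. Condition 3 (constant $c$): for all $\mathcal P,\mathcal Q\in\mathbb D$ with $\mathbb E_{(x,y)\sim\mathcal P}[y]\neq\mathbb E_{(x,y)\sim\mathcal Q}[y]$, either $\mathcal P_X\neq\mathcal Q_X$, or there is no set $S'\subseteq\mathbb R^d$ with $\mathrm{vol}(S')\ge c$ such that $\mathcal P(x,y)=\mathcal Q(x,y)$ for all $(x,y)\in S'\times\mathbb R$. *)

theory Defs
  imports "HOL-Probability.Probability"
begin

text \<open>An observational study is modelled as a probability measure D on the Borel sets of
  the sample space of tuples (X, T, Y(0), Y(1)), X in a Euclidean space, T in bool
  (True = treatment 1), Y(0), Y(1) real.\<close>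

definition obs_X :: "'a \<times> bool \<times> real \<times> real \<Rightarrow> 'a" where
  "obs_X \<omega> = fst \<omega>"
definition obs_T :: "'a \<times> bool \<times> real \<times> real \<Rightarrow> bool" where
  "obs_T \<omega> = fst (snd \<omega>)"
definition obs_Y :: "bool \<Rightarrow> 'a \<times> bool \<times> real \<times> real \<Rightarrow> real" where
  "obs_Y t \<omega> = (if t then snd (snd (snd \<omega>)) else fst (snd (snd \<omega>)))"

definition law_XY :: "('a::euclidean_space \<times> bool \<times> real \<times> real) measure \<Rightarrow> bool
    \<Rightarrow> ('a \<times> real) measure" where
  "law_XY D t = distr D borel (\<lambda>\<omega>. (obs_X \<omega>, obs_Y t \<omega>))"

definition has_density :: "('a::euclidean_space \<times> real) measure \<Rightarrow> bool" where
  "has_density P \<longleftrightarrow> (\<exists>g. g \<in> borel_measurable lborel \<and> (\<forall>z. g z \<ge> 0)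
      \<and> P = density lborel (\<lambda>z. ennreal (g z)))"

text \<open>Observational study: a Borel probability measure whose laws of (X,Y(t)) have densities;
  outcomes are integrable so that tau is well defined.\<close>
definition obs_study :: "('a::euclidean_space \<times> bool \<times> real \<times> real) measure \<Rightarrow> bool" where
  "obs_study D \<longleftrightarrow> prob_space D \<and> sets D = sets borel
     \<and> has_density (law_XY D False) \<and> has_density (law_XY D True)
     \<and> integrable D (obs_Y False) \<and> integrable D (obs_Y True)"

definition censored :: "('a::euclidean_space \<times> bool \<times> real \<times> real) measure
    \<Rightarrow> ('a \<times> bool \<times> real) measure" where
  "censored D = distr D borel (\<lambda>\<omega>. (obs_X \<omega>, obs_T \<omega>, obs_Y (obs_T \<omega>) \<omega>))"

definition ate :: "('a::euclidean_space \<times> bool \<times> real \<times> real) measure \<Rightarrow> real" where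
  "ate D = (\<integral>\<omega>. obs_Y True \<omega> - obs_Y False \<omega> \<partial>D)"

text \<open>p is (a version of) the generalized propensity score
  p_t(x,y) = Pr[T = t | X = x, Y(t) = y], i.e. a measurable function such that
  Pr[T = t, (X,Y(t)) \<in> A] = integral over A of p w.r.t. the law of (X,Y(t)).\<close>
definition is_gen_propensity ::
  "('a::euclidean_space \<times> bool \<times> real \<times> real) measure \<Rightarrow> bool \<Rightarrow> ('a \<times> real \<Rightarrow> real) \<Rightarrow> bool" where
  "is_gen_propensity D t p \<longleftrightarrow> p \<in> borel_measurable borel \<and>
     (\<forall>A \<in> sets borel. measure D {\<omega> \<in> space D. obs_T \<omega> = t \<and> (obs_X \<omega>, obs_Y t \<omega>) \<in> A}
        = (\<integral>z. indicator A z * p z \<partial>(law_XY D t)))"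

definition RD_design :: "real \<Rightarrow> 'a::euclidean_space set
    \<Rightarrow> ('a \<times> bool \<times> real \<times> real) measure \<Rightarrow> bool" where
  "RD_design c S D \<longleftrightarrow> S \<in> sets lborel
     \<and> emeasure lborel S > ennreal c \<and> emeasure lborel (- S) > ennreal c
     \<and> is_gen_propensity D False (\<lambda>(x, y). indicator (- S) x)
     \<and> is_gen_propensity D True (\<lambda>(x, y). indicator S x)"

definition x_marginal :: "('a::euclidean_space \<times> real) measure \<Rightarrow> 'a measure" where
  "x_marginal P = distr P borel fst"

definition mean_outcome :: "('a::euclidean_space \<times> real) measure \<Rightarrow> real" where
  "mean_outcome P = (\<integral>z. snd z \<partial>P)"

text \<open>Densities of P and Q agree on S' x R (as densities, i.e. the measures agree there).\<close>
definition agree_on_strip :: "('a::euclidean_space \<times> real) measure \<Rightarrow> ('a \<times> real) measure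
    \<Rightarrow> 'a set \<Rightarrow> bool" where
  "agree_on_strip P Q S' \<longleftrightarrow>
     (\<forall>A \<in> sets borel. A \<subseteq> S' \<times> UNIV \<longrightarrow> emeasure P A = emeasure Q A)"

definition condition3 :: "real \<Rightarrow> ('a::euclidean_space \<times> real) measure set \<Rightarrow> bool" where
  "condition3 c DD \<longleftrightarrow> (\<forall>P \<in> DD. \<forall>Q \<in> DD. mean_outcome P \<noteq> mean_outcome Q \<longrightarrow>
      (x_marginal P \<noteq> x_marginal Q \<or>
       \<not> (\<exists>S' \<in> sets lborel. emeasure lborel S' \<ge> ennreal c \<and> agree_on_strip P Q S')))"

definition support :: "'a::euclidean_space measure \<Rightarrow> 'a set" where
  "support M = {x. \<forall>e>0. emeasure M (ball x e) > 0}"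

definition realizable :: "('a::euclidean_space \<times> real) measure set
    \<Rightarrow> ('a \<times> bool \<times> real \<times> real) measure \<Rightarrow> bool" where
  "realizable DD D \<longleftrightarrow> law_XY D False \<in> DD \<and> law_XY D True \<in> DD"

end

theory Submission
  imports Defs
begin

lemma openT: "open {\<omega>::'a::topological_space \<times> bool \<times> 'b::topological_space. fst (snd \<omega>) = t}"
proof -
  have "{\<omega>::'a \<times> bool \<times> 'b. fst (snd \<omega>) = t} = UNIV \<times> {t} \<times> UNIV" by auto
  moreover have "open {t::bool}" by (rule Topological_Spaces.open_discrete)
  ultimately show ?thesis by (simp add: open_Times)
qed
lemma meas_g: "(\<lambda>\<omega>::'a::euclidean_space \<times> bool \<times> real \<times> real. (obs_X \<omega>, obs_Y t \<omega>)) \<in> borel_measurable borel"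
  unfolding obs_X_def obs_Y_def
  by (cases t) (auto intro!: borel_measurable_continuous_onI continuous_intros)
lemma meas_c: "(\<lambda>\<omega>::'a::euclidean_space \<times> bool \<times> real \<times> real. (obs_X \<omega>, obs_T \<omega>, obs_Y (obs_T \<omega>) \<omega>)) \<in> borel_measurable borel"
proof -
  have e: "(\<lambda>\<omega>::'a \<times> bool \<times> real \<times> real. (obs_X \<omega>, obs_T \<omega>, obs_Y (obs_T \<omega>) \<omega>)) =
     (\<lambda>\<omega>. if fst (snd \<omega>) then (fst \<omega>, True, snd (snd (snd \<omega>))) else (fst \<omega>, False, fst (snd (snd \<omega>))))"
    by (auto simp: obs_X_def obs_T_def obs_Y_def fun_eq_iff)
  have s: "{\<omega>\<in>space (borel :: ('a \<times> bool \<times> real \<times> real) measure). fst (snd \<omega>)} \<in> sets borel"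
    using openT[where t=True, where 'a='a and 'b="real\<times>real"] by simp
  show ?thesis unfolding e
    by (rule measurable_If[OF _ _ s]) (auto intro!: borel_measurable_continuous_onI continuous_intros)
qed
lemma setB: "A \<in> sets (borel :: ('a::euclidean_space \<times> real) measure) \<Longrightarrow> {z::'a \<times> bool \<times> real. fst (snd z) = t \<and> (fst z, snd (snd z)) \<in> A} \<in> sets borel"
proof -
  assume A: "A \<in> sets borel"
  have h: "(\<lambda>z::'a \<times> bool \<times> real. (fst z, snd (snd z))) \<in> borel_measurable borel"
    by (auto intro!: borel_measurable_continuous_onI continuous_intros)
  have "(\<lambda>z::'a \<times> bool \<times> real. (fst z, snd (snd z))) -` A \<inter> space borel \<in> sets borel"
    using measurable_sets[OF h A] .
  moreover have "{z::'a \<times> bool \<times> real. fst (snd z) = t} \<in> sets borel" using openT[where t=t, where 'a='a and 'b=real] by simp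
  ultimately have "{z::'a \<times> bool \<times> real. fst (snd z) = t} \<inter> ((\<lambda>z::'a \<times> bool \<times> real. (fst z, snd (snd z))) -` A \<inter> space borel) \<in> sets borel" by blast
  moreover have "{z::'a \<times> bool \<times> real. fst (snd z) = t \<and> (fst z, snd (snd z)) \<in> A} = {z::'a \<times> bool \<times> real. fst (snd z) = t} \<inter> ((\<lambda>z::'a \<times> bool \<times> real. (fst z, snd (snd z))) -` A \<inter> space borel)" by auto
  ultimately show ?thesis by simp
qed

lemma meas_D:
  assumes "sets D = sets (borel :: ('a::euclidean_space \<times> bool \<times> real \<times> real) measure)"
    and "f \<in> borel_measurable (borel :: ('a \<times> bool \<times> real \<times> real) measure)"
  shows "f \<in> measurable D borel"
  using assms measurable_cong_sets[of D borel borel borel] by simp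

lemma key:
  fixes D :: "('a::euclidean_space \<times> bool \<times> real \<times> real) measure"
  assumes ps: "prob_space D" and sD: "sets D = sets borel"
    and hp: "is_gen_propensity D t (\<lambda>(x, y). indicator St x)"
    and A: "A \<in> sets borel" and sub: "A \<subseteq> St \<times> UNIV"
  shows "measure (law_XY D t) A = measure (censored D) {z. fst (snd z) = t \<and> (fst z, snd (snd z)) \<in> A}"
proof -
  let ?g = "\<lambda>\<omega>::'a \<times> bool \<times> real \<times> real. (obs_X \<omega>, obs_Y t \<omega>)"
  let ?c = "\<lambda>\<omega>::'a \<times> bool \<times> real \<times> real. (obs_X \<omega>, obs_T \<omega>, obs_Y (obs_T \<omega>) \<omega>)"
  have mg: "?g \<in> measurable D borel" by (rule meas_D[OF sD meas_g])
  have mc: "?c \<in> measurable D borel" by (rule meas_D[OF sD meas_c])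
  interpret L: prob_space "law_XY D t"
    unfolding law_XY_def using prob_space.prob_space_distr[OF ps mg] .
  have sL: "sets (law_XY D t) = sets borel" unfolding law_XY_def by simp
  have "measure D {\<omega> \<in> space D. obs_T \<omega> = t \<and> ?g \<omega> \<in> A}
      = (\<integral>z. indicator A z * (\<lambda>(x, y). indicator St x) z \<partial>(law_XY D t))"
    using hp A unfolding is_gen_propensity_def by blast
  also have "\<dots> = (\<integral>z. indicator A z \<partial>(law_XY D t))"
    using sub by (intro Bochner_Integration.integral_cong) (auto simp: indicator_def split: prod.splits)
  also have "\<dots> = measure (law_XY D t) A"
    using A sL by (simp add: integral_indicator L.emeasure_eq_measure)
  finally have 1: "measure D {\<omega> \<in> space D. obs_T \<omega> = t \<and> ?g \<omega> \<in> A} = measure (law_XY D t) A" .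
  have "measure (censored D) {z. fst (snd z) = t \<and> (fst z, snd (snd z)) \<in> A}
      = measure D (?c -` {z. fst (snd z) = t \<and> (fst z, snd (snd z)) \<in> A} \<inter> space D)"
    unfolding censored_def using mc setB[OF A] by (rule measure_distr)
  also have "?c -` {z. fst (snd z) = t \<and> (fst z, snd (snd z)) \<in> A} \<inter> space D
      = {\<omega> \<in> space D. obs_T \<omega> = t \<and> ?g \<omega> \<in> A}"
    by (auto simp: obs_T_def)
  finally show ?thesis using 1 by simp
qed

lemma xmarg:
  fixes D :: "('a::euclidean_space \<times> bool \<times> real \<times> real) measure"
  assumes sD: "sets D = sets borel"
  shows "x_marginal (law_XY D t) = distr (censored D) borel fst"
proof -
  have mf: "(fst :: 'a \<times> real \<Rightarrow> 'a) \<in> borel_measurable borel"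
    by (auto intro!: borel_measurable_continuous_onI continuous_intros)
  have mf2: "(fst :: 'a \<times> bool \<times> real \<Rightarrow> 'a) \<in> borel_measurable borel"
    by (auto intro!: borel_measurable_continuous_onI continuous_intros)
  have "x_marginal (law_XY D t) = distr D borel (fst \<circ> (\<lambda>\<omega>. (obs_X \<omega>, obs_Y t \<omega>)))"
    unfolding x_marginal_def law_XY_def using mf meas_D[OF sD meas_g] by (rule distr_distr)
  also have "\<dots> = distr D borel (fst \<circ> (\<lambda>\<omega>. (obs_X \<omega>, obs_T \<omega>, obs_Y (obs_T \<omega>) \<omega>)))"
    by (simp add: o_def)
  also have "\<dots> = distr (censored D) borel fst"
    unfolding censored_def using mf2 meas_D[OF sD meas_c] by (rule distr_distr[symmetric])
  finally show ?thesis .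
qed

lemma mean_law:
  fixes D :: "('a::euclidean_space \<times> bool \<times> real \<times> real) measure"
  assumes sD: "sets D = sets borel"
  shows "mean_outcome (law_XY D t) = (\<integral>\<omega>. obs_Y t \<omega> \<partial>D)"
proof -
  have ms: "(snd :: 'a \<times> real \<Rightarrow> real) \<in> borel_measurable borel"
    by (auto intro!: borel_measurable_continuous_onI continuous_intros)
  show ?thesis unfolding mean_outcome_def law_XY_def
    using integral_distr[OF meas_D[OF sD meas_g] ms] by simp
qed

lemma same_mean:
  fixes D1 D2 :: "('a::euclidean_space \<times> bool \<times> real \<times> real) measure"
  assumes c3: "condition3 c DD" and DD: "\<forall>P \<in> DD. prob_space P \<and> sets P = sets borel \<and> has_density P"
    and v1: "obs_study D1 \<and> RD_design c S D1 \<and> realizable DD D1"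
    and v2: "obs_study D2 \<and> RD_design c S D2 \<and> realizable DD D2"
    and eq: "censored D1 = censored D2"
    and St: "St \<in> sets lborel" "emeasure lborel St > ennreal c"
    and p1: "is_gen_propensity D1 t (\<lambda>(x, y). indicator St x)"
    and p2: "is_gen_propensity D2 t (\<lambda>(x, y). indicator St x)"
  shows "mean_outcome (law_XY D1 t) = mean_outcome (law_XY D2 t)"
proof (rule ccontr)
  assume ne: "mean_outcome (law_XY D1 t) \<noteq> mean_outcome (law_XY D2 t)"
  have in1: "law_XY D1 t \<in> DD" using v1 unfolding realizable_def by (cases t) auto
  have in2: "law_XY D2 t \<in> DD" using v2 unfolding realizable_def by (cases t) auto
  have ps1: "prob_space D1" "sets D1 = sets borel" using v1 unfolding obs_study_def by auto
  have ps2: "prob_space D2" "sets D2 = sets borel" using v2 unfolding obs_study_def by auto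
  have xm: "x_marginal (law_XY D1 t) = x_marginal (law_XY D2 t)"
    using xmarg[OF ps1(2)] xmarg[OF ps2(2)] eq by simp
  interpret P1: prob_space "law_XY D1 t" using DD in1 by blast
  interpret P2: prob_space "law_XY D2 t" using DD in2 by blast
  have ag: "agree_on_strip (law_XY D1 t) (law_XY D2 t) St"
    unfolding agree_on_strip_def
  proof (intro ballI impI)
    fix A :: "('a \<times> real) set" assume A: "A \<in> sets borel" and sub: "A \<subseteq> St \<times> UNIV"
    have "measure (law_XY D1 t) A = measure (law_XY D2 t) A"
      using key[OF ps1 p1 A sub] key[OF ps2 p2 A sub] eq by simp
    then show "emeasure (law_XY D1 t) A = emeasure (law_XY D2 t) A"
      by (simp add: P1.emeasure_eq_measure P2.emeasure_eq_measure)
  qed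
  have "emeasure lborel St \<ge> ennreal c" using St(2) by simp
  then show False using c3 in1 in2 ne xm ag St(1) unfolding condition3_def by blast
qed

theorem corollary4p7:
  fixes c :: real and S :: "'a::euclidean_space set"
    and DD :: "('a \<times> real) measure set"
  assumes "0 < c" and "c < 1/2"
    and "\<forall>P \<in> DD. prob_space P \<and> sets P = sets borel \<and> has_density P"
    and "condition3 c DD"
    and "\<forall>P \<in> DD. support (x_marginal P) = UNIV"
  shows "\<exists>f :: ('a \<times> bool \<times> real) measure \<Rightarrow> real.
           \<forall>D. obs_study D \<and> RD_design c S D \<and> realizable DD D \<longrightarrow> f (censored D) = ate D"
proof -
  let ?V = "\<lambda>D. obs_study D \<and> RD_design c S D \<and> realizable DD D"
  have uniq: "ate D1 = ate D2" if v1: "?V D1" and v2: "?V D2" and eq: "censored D1 = censored D2" for D1 D2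
  proof -
    have rd1: "S \<in> sets lborel" "emeasure lborel S > ennreal c" "emeasure lborel (- S) > ennreal c"
      "is_gen_propensity D1 False (\<lambda>(x, y). indicator (- S) x)"
      "is_gen_propensity D1 True (\<lambda>(x, y). indicator S x)"
      using v1 unfolding RD_design_def by auto
    have rd2: "is_gen_propensity D2 False (\<lambda>(x, y). indicator (- S) x)"
      "is_gen_propensity D2 True (\<lambda>(x, y). indicator S x)"
      using v2 unfolding RD_design_def by auto
    have cS: "- S \<in> sets lborel" using rd1(1) by (simp add: Compl_eq_Diff_UNIV sets.compl_sets)
    have mT: "mean_outcome (law_XY D1 True) = mean_outcome (law_XY D2 True)"
      by (rule same_mean[OF assms(4,3) v1 v2 eq rd1(1,2) rd1(5) rd2(2)])
    have mF: "mean_outcome (law_XY D1 False) = mean_outcome (law_XY D2 False)"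
      by (rule same_mean[OF assms(4,3) v1 v2 eq cS rd1(3) rd1(4) rd2(1)])
    have ateq: "ate D = mean_outcome (law_XY D True) - mean_outcome (law_XY D False)" if "obs_study D" for D
    proof -
      have "sets D = sets borel" "integrable D (obs_Y False)" "integrable D (obs_Y True)"
        using that unfolding obs_study_def by auto
      then show ?thesis unfolding ate_def
        by (simp add: mean_law Bochner_Integration.integral_diff)
    qed
    show ?thesis using ateq[of D1] ateq[of D2] v1 v2 mT mF by simp
  qed
  define f where "f C = (SOME r. \<exists>D. ?V D \<and> censored D = C \<and> r = ate D)" for C
  show ?thesis
  proof (intro exI allI impI)
    fix D assume v: "?V D"
    have "\<exists>r. \<exists>D'. ?V D' \<and> censored D' = censored D \<and> r = ate D'" using v by blast
    then have "\<exists>D'. ?V D' \<and> censored D' = censored D \<and> f (censored D) = ate D'"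
      unfolding f_def by (rule someI_ex)
    then show "f (censored D) = ate D" using uniq v by metis
  qed
qed

end
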